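(* Let $p$ be a prime, let $m\geq 2$ be an integer with $\gcd(p,m)=1$, and let $k$ be a nonnegative integer. Then $$\Psi_{p^km}(x)\equiv \Psi_m(x)^{\varphi(p^k)}\pmod p,$$ i.e., the congruence holds coefficientwise in $\mathbb{Z}[x]$.
   Context: The Fibonacci polynomials are defined by $F_1(x)=1$, $F_2(x)=x$, and $F_n(x)=xF_{n-1}(x)+F_{n-2}(x)$ for $n\geq 3$. For $n\geq 2$, the $n$-th fibotomic polynomial $\Psi_n(x)\in\mathbb{Z}[x]$ is the product of the monic irreducible factors of $F_n(x)$ which are not factors of $F_k(x)$ for any $k<n$; also $\Psi_1(x)=1$. $\varphi$ is Euler's totient function. *)

theory Defs
  imports "HOL-Computational_Algebra.Computational_Algebra" "HOL-Number_Theory.Cong" "HOL-Number_Theory.Totient"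
begin

fun fibpoly :: "nat \<Rightarrow> int poly" where
  "fibpoly 0 = 0"
| "fibpoly (Suc 0) = 1"
| "fibpoly (Suc (Suc n)) = [:0, 1:] * fibpoly (Suc n) + fibpoly n"

definition fibotomic :: "nat \<Rightarrow> int poly" where
  "fibotomic n = (if n \<le> 1 then 1 else
     \<Prod> {q :: int poly. irreducible q \<and> lead_coeff q = 1 \<and> q dvd fibpoly n \<and>
                        (\<forall>k. 1 \<le> k \<and> k < n \<longrightarrow> \<not> q dvd fibpoly k)})"

end

theory Submission
  imports Defs
begin


abbreviation X :: "int poly" where "X \<equiv> [:0,1:]"

lemma gen_lc: "degree (p::int poly) < degree q \<Longrightarrow> degree q = k \<Longrightarrow> lead_coeff q = 1 \<Longrightarrow>
   degree (q + p) = k \<and> lead_coeff (q+p) = 1"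
  using coeff_eq_0[of p "degree q"] by (simp add: degree_add_eq_left)

lemma F_deg_lc: "degree (fibpoly (Suc n)) = n \<and> lead_coeff (fibpoly (Suc n)) = 1"
proof (induction n rule: nat_less_induct)
  case (1 n)
  show ?case
  proof (cases n)
    case 0 then show ?thesis by simp
  next
    case (Suc m)
    note IH = 1[rule_format]
    show ?thesis
    proof (cases m)
      case 0 then show ?thesis using Suc by simp
    next
      case (Suc j)
      have a: "degree (fibpoly (Suc m)) = m" "lead_coeff (fibpoly (Suc m)) = 1"
        using IH[of m] \<open>n = Suc m\<close> by auto
      have b: "degree (fibpoly (Suc j)) = j"
        using IH[of j] \<open>n = Suc m\<close> Suc by auto
      have nz: "fibpoly (Suc m) \<noteq> 0" by (metis a(2) coeff_0 zero_neq_one)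
      have c: "degree (X * fibpoly (Suc m)) = Suc m"
        using nz a by (simp add: degree_mult_eq)
      have d: "lead_coeff (X * fibpoly (Suc m)) = 1"
      proof -
        have lx: "lead_coeff X = 1" by simp
        show ?thesis using lead_coeff_mult[of X "fibpoly (Suc m)"] lx a(2) by (metis mult_1)
      qed
      have e: "fibpoly (Suc n) = X * fibpoly (Suc m) + fibpoly (Suc j)"
        using \<open>n = Suc m\<close> Suc by simp
      have lt: "degree (fibpoly (Suc j)) < degree (X * fibpoly (Suc m))" using b c Suc by simp
      have c': "degree (X * fibpoly (Suc m)) = n" using c \<open>n = Suc m\<close> by simp
      have g: "degree (X * fibpoly (Suc m) + fibpoly (Suc j)) = n \<and> lead_coeff (X * fibpoly (Suc m) + fibpoly (Suc j)) = 1"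
        by (rule gen_lc[OF lt c' d])
      show "degree (fibpoly (Suc n)) = n \<and> lead_coeff (fibpoly (Suc n)) = 1"
        unfolding e by (rule g)
    qed
  qed
qed

lemma F_nz: "n \<ge> 1 \<Longrightarrow> fibpoly n \<noteq> 0"
  using F_deg_lc[of "n-1"] by (cases n) auto

lemma F_lc: "n \<ge> 1 \<Longrightarrow> lead_coeff (fibpoly n) = 1"
  using F_deg_lc[of "n-1"] by (cases n) auto

lemma F_add: "fibpoly (m + n + 1) = fibpoly (m+1) * fibpoly (n+1) + fibpoly m * fibpoly n"
proof (induction m arbitrary: n rule: fibpoly.induct)
  case 1 then show ?case by simp
next
  case 2 then show ?case by (simp add: algebra_simps)
next
  case (3 m)
  have e0: "fibpoly (Suc (Suc m) + n + 1) = X * fibpoly (Suc m + n + 1) + fibpoly (m + n + 1)"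
    by (simp add: numeral_eq_Suc)
  have r1: "fibpoly (Suc (Suc m) + 1) = X * fibpoly (Suc m + 1) + fibpoly (m+1)" by simp
  have r2: "fibpoly (Suc (Suc m)) = X * fibpoly (Suc m) + fibpoly m" by simp
  have gen: "\<And>(x::int poly) a b c d e f g h i j. a = x*b + c \<Longrightarrow> b = d*e + f*g \<Longrightarrow> c = h*e+i*g
     \<Longrightarrow> j = x*d+h \<Longrightarrow> a = j*e + (x*f+i)*g"
    by (simp add: algebra_simps)
  show ?case using gen[OF e0 3(1)[of n] 3(2)[of n] r1] r2 by simp

qed

lemma F_dvd_mult: "fibpoly d dvd fibpoly (d * k)"
proof (induction k)
  case 0 then show ?case by simp
next
  case (Suc k)
  show ?case
  proof (cases d)
    case 0 then show ?thesis by simp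
  next
    case (Suc e)
    have "fibpoly (d * Suc k) = fibpoly (d*k + e + 1)" using Suc by (simp add: algebra_simps)
    also have "\<dots> = fibpoly (d*k+1) * fibpoly (e+1) + fibpoly (d*k) * fibpoly e" by (rule F_add)
    finally show ?thesis using Suc.IH \<open>d = Suc e\<close> by simp
  qed
qed

lemma F_consec: "q dvd fibpoly n \<Longrightarrow> q dvd fibpoly (Suc n) \<Longrightarrow> is_unit q"
proof (induction n)
  case 0 then show ?case by simp
next
  case (Suc n)
  have "q dvd fibpoly (Suc (Suc n)) - X * fibpoly (Suc n)"
    by (intro dvd_diff Suc.prems(2) dvd_mult Suc.prems(1))
  then have "q dvd fibpoly n" by simp
  then show ?case using Suc by blast
qed

lemma F_sub:
  assumes q: "prime_elem q" and a: "q dvd fibpoly a" and ab: "q dvd fibpoly (a + b)"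
  shows "q dvd fibpoly b"
proof (cases b)
  case 0 then show ?thesis by simp
next
  case (Suc c)
  have "fibpoly (a+b) = fibpoly (a+1) * fibpoly (c+1) + fibpoly a * fibpoly c"
    using F_add[of a c] Suc by simp
  then have eq: "fibpoly (a+1) * fibpoly b = fibpoly (a+b) - fibpoly a * fibpoly c"
    using Suc by simp
  have "q dvd fibpoly (a+1) * fibpoly b" unfolding eq
    by (intro dvd_diff ab dvd_mult2 a)
  moreover have "\<not> q dvd fibpoly (a+1)" using F_consec[of q a] a q prime_elem_not_unit by auto
  ultimately show ?thesis using q prime_elem_dvd_mult_iff by blast
qed

lemma F_rank_dvd:
  assumes q: "prime_elem q" and d: "d \<ge> 1" "q dvd fibpoly d"
    and mn: "\<forall>k. 1 \<le> k \<and> k < d \<longrightarrow> \<not> q dvd fibpoly k"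
    and qn: "q dvd fibpoly n"
  shows "d dvd n"
proof -
  have key: "q dvd fibpoly (d * J + r) \<Longrightarrow> q dvd fibpoly r" for J r
  proof (induction J)
    case 0 then show ?case by simp
  next
    case (Suc J)
    have eq: "d * Suc J + r = d + (d * J + r)" by simp
    have "q dvd fibpoly (d + (d * J + r))" using Suc.prems by (simp only: eq)
    then have "q dvd fibpoly (d * J + r)" by (rule F_sub[OF q d(2)])
    then show ?case by (rule Suc.IH)
  qed
  have "q dvd fibpoly (d * (n div d) + n mod d)" using qn by simp
  then have r: "q dvd fibpoly (n mod d)" by (rule key)
  have lt: "n mod d < d" using d by simp
  have "n mod d = 0"
  proof (rule ccontr)
    assume "n mod d \<noteq> 0"
    then have "1 \<le> n mod d" by simp
    then show False using mn[rule_format, of "n mod d"] lt r by simp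
  qed
  then show "d dvd n" by auto
qed




lemma F_cassini: "fibpoly (n+1)^2 - X * fibpoly (n+1) * fibpoly n - fibpoly n ^2 = (-1)^n"
proof (induction n)
  case 0 then show ?case by simp
next
  case (Suc n)
  have r: "fibpoly (Suc n + 1) = X * fibpoly (n+1) + fibpoly n" by simp
  have gen: "\<And>(x::int poly) a b c e. a = x*b + c \<Longrightarrow> b^2 - x*b*c - c^2 = e \<Longrightarrow>
      a^2 - x*a*b - b^2 = -e"
    by (simp add: algebra_simps power2_eq_square)
  show ?case using gen[OF r Suc.IH] by simp
qed

lemma F_deriv: "(X^2 + 4) * pderiv (fibpoly n) =
   2 * of_nat n * fibpoly (n+1) - (of_nat n + 1) * X * fibpoly n"
proof (induction n rule: fibpoly.induct)
  case 1 then show ?case by simp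
next
  case 2 then show ?case by (simp add: algebra_simps)
next
  case (3 n)
  have r1: "fibpoly (Suc (Suc n)) = X * fibpoly (Suc n) + fibpoly n" by simp
  have r2: "fibpoly (Suc (Suc n) + 1) = X * fibpoly (Suc (Suc n)) + fibpoly (Suc n)" by simp
  have pd: "pderiv (fibpoly (Suc (Suc n))) = fibpoly (Suc n) + X * pderiv (fibpoly (Suc n)) + pderiv (fibpoly n)"
    by (simp add: pderiv_add pderiv_mult pderiv_pCons)
  have gen: "\<And>(x::int poly) N A B C D dA dB dC. C = x*A + B \<Longrightarrow> D = x*C + A \<Longrightarrow>
     dC = A + x*dA + dB \<Longrightarrow>
     (x^2+4)*dA = 2*(N+1)*C - (N+1+1)*x*A \<Longrightarrow>
     (x^2+4)*dB = 2*N*A - (N+1)*x*B \<Longrightarrow>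
     (x^2+4)*dC = 2*(N+1+1)*D - (N+1+1+1)*x*C"
  proof -
    fix x N A B C D dA dB dC :: "int poly"
    assume h: "C = x*A + B" "D = x*C + A" "dC = A + x*dA + dB"
      "(x^2+4)*dA = 2*(N+1)*C - (N+1+1)*x*A" "(x^2+4)*dB = 2*N*A - (N+1)*x*B"
    have "(x^2+4)*dC = (x^2+4)*A + x*((x^2+4)*dA) + (x^2+4)*dB" using h(3) by (simp add: algebra_simps)
    also have "\<dots> = (x^2+4)*A + x*(2*(N+1)*C - (N+1+1)*x*A) + (2*N*A - (N+1)*x*B)" using h(4,5) by simp
    also have "\<dots> = 2*(N+1+1)*D - (N+1+1+1)*x*C" unfolding h(2) h(1)
      by (simp add: algebra_simps power2_eq_square)
    finally show "(x^2+4)*dC = 2*(N+1+1)*D - (N+1+1+1)*x*C" .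
  qed
  have "(X^2 + 4) * pderiv (fibpoly (Suc (Suc n))) = 2 * (of_nat n+1+1) * fibpoly (Suc (Suc n) + 1) - (of_nat n + 1 + 1 + 1) * X * fibpoly (Suc (Suc n))"
    by (rule gen[OF r1 r2 pd]) (use 3 in \<open>simp_all add: algebra_simps\<close>)
  then show ?case by (simp add: algebra_simps)
qed




lemma F_sqfree:
  assumes q: "prime_elem q" "lead_coeff q = 1" and n: "n \<ge> 1" and d: "q^2 dvd fibpoly n"
  shows False
proof -
  define F where "F = fibpoly n"
  define N :: "int poly" where "N = of_nat n"
  define M where "M = 2 * fibpoly (n+1) - X * F"
  obtain h where h: "F = q*q*h" using d unfolding F_def power2_eq_square by (auto elim: dvdE)
  have "pderiv F = q * (pderiv q * h + pderiv q * h + q * pderiv h)"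
    unfolding h by (simp add: pderiv_mult algebra_simps)
  then have qd: "q dvd pderiv F" by simp
  have e1: "N * M = (X^2 + 4) * pderiv F + X * F"
  proof -
    have gen: "\<And>(x::int poly) Q D N B F. Q*D = 2*N*B - (N+1)*x*F \<Longrightarrow> N*(2*B - x*F) = Q*D + x*F"
      by (simp add: algebra_simps)
    show ?thesis unfolding N_def M_def F_def by (rule gen[OF F_deriv])
  qed
  have "q dvd F" using h by simp
  then have "q dvd N * M" unfolding e1 using qd by (intro dvd_add dvd_mult)
  then have q2: "q dvd (N*M)^2" by (simp add: power2_eq_square)
  have cas: "M^2 - (X^2+4) * F^2 = 4 * (-1)^n"
  proof -
    have gen: "\<And>(x::int poly) b c. (2*b - x*c)^2 - (x^2+4)*c^2 = 4*(b^2 - x*b*c - c^2)"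
      by (simp add: algebra_simps power2_eq_square)
    show ?thesis unfolding M_def F_def gen F_cassini ..
  qed
  have eqc: "N^2 * (4 * (-1)^n) = (N*M)^2 - N^2 * ((X^2+4) * F^2)"
    unfolding cas[symmetric] by (simp add: algebra_simps power2_eq_square)
  have "q dvd N^2 * ((X^2+4) * F^2)" using h by (simp add: power2_eq_square)
  then have qc: "q dvd N^2 * (4 * (-1)^n)" unfolding eqc by (rule dvd_diff[OF q2])
  have m1: "(- 1 :: int poly) ^ n = [:(-1)^n:]" by (induction n) auto
  have ceq: "N^2 * (4 * (-1)^n) = [:int n ^2 * 4 * (-1)^n:]"
    unfolding N_def by (simp add: of_nat_poly poly_const_pow numeral_poly m1 algebra_simps)
  have cnz: "[:int n ^2 * 4 * (-1)^n:] \<noteq> 0" using n by simp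
  have "degree q \<le> degree [:int n ^2 * 4 * (-1)^n:]"
    by (rule dvd_imp_degree_le[OF qc[unfolded ceq] cnz])
  then have "degree q = 0" by simp
  then obtain a where a: "q = [:a:]" using degree0_coeffs by blast
  then have "a = 1" using q(2) by simp
  then have "q = 1" using a by simp
  then show False using q(1) by simp
qed




instance poly :: ("{factorial_ring_gcd,semiring_gcd_mult_normalize}") factorial_semiring_multiplicative ..


lemma monic_normalize: "lead_coeff (q :: int poly) = 1 \<Longrightarrow> normalize q = q"
  by (simp add: normalize_poly_def flip: one_pCons)

lemma prime_iff_monic:
  assumes f: "lead_coeff (f :: int poly) = 1" and qf: "q dvd f"
  shows "prime q \<longleftrightarrow> irreducible q \<and> lead_coeff q = 1"
proof
  assume "irreducible q \<and> lead_coeff q = 1"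
  then show "prime q" by (simp add: prime_def prime_elem_iff_irreducible monic_normalize)
next
  assume pq: "prime q"
  obtain h where h: "f = q * h" using qf by (auto elim: dvdE)
  have "lead_coeff q * lead_coeff h = 1" using f h by (simp add: lead_coeff_mult)
  then have lc: "lead_coeff q = 1 \<or> lead_coeff q = -1" by (auto simp: zmult_eq_1_iff)
  have q0: "q \<noteq> 0" using pq by auto
  have "unit_factor q = 1" using normalize_idem_imp_unit_factor_eq[OF normalize_prime[OF pq]] q0 by simp
  then have u: "[:unit_factor (lead_coeff q):] = 1" by (simp add: unit_factor_poly_def)
  have "unit_factor (lead_coeff q) = 1" using arg_cong[OF u, of "\<lambda>p. coeff p 0"] by simp
  then have "lead_coeff q = 1" using lc by auto
  then show "irreducible q \<and> lead_coeff q = 1" using pq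
    by (simp add: prime_def prime_elem_iff_irreducible)
qed

definition S :: "nat \<Rightarrow> int poly set" where
  "S d = {q \<in> prime_factors (fibpoly d). \<forall>k. 1 \<le> k \<and> k < d \<longrightarrow> \<not> q dvd fibpoly k}"

lemma fibotomic_S: "d \<ge> 1 \<Longrightarrow> fibotomic d = \<Prod> (S d)"
proof (cases "d = 1")
  case True then show ?thesis by (simp add: fibotomic_def S_def)
next
  case False
  assume d: "d \<ge> 1"
  have "{q :: int poly. irreducible q \<and> lead_coeff q = 1 \<and> q dvd fibpoly d \<and>
                        (\<forall>k. 1 \<le> k \<and> k < d \<longrightarrow> \<not> q dvd fibpoly k)} = S d"
    unfolding S_def using prime_iff_monic[OF F_lc[OF d]] F_nz[OF d]
    by (auto simp: in_prime_factors_iff)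
  then show ?thesis using False d by (simp add: fibotomic_def)
qed

lemma F_prod: assumes n: "n \<ge> 1" shows "fibpoly n = (\<Prod>d \<in> {d. d dvd n}. fibotomic d)"
proof -
  have nz: "fibpoly n \<noteq> 0" using F_nz[OF n] .
  have mult1: "multiplicity q (fibpoly n) = 1" if q: "q \<in> prime_factors (fibpoly n)" for q
  proof -
    have pq: "prime q" and qd: "q dvd fibpoly n" using q by (auto simp: in_prime_factors_iff)
    have lc: "lead_coeff q = 1" using prime_iff_monic[OF F_lc[OF n] qd] pq by simp
    have "\<not> q^2 dvd fibpoly n" using F_sqfree[of q n] pq lc n by auto
    moreover have nu: "\<not> is_unit q" using prime_elem_not_unit[OF prime_imp_prime_elem[OF pq]] .
    ultimately have "multiplicity q (fibpoly n) < 2" using nz power_dvd_iff_le_multiplicity[where p=q and n=2 and x="fibpoly n"] by simp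
    moreover have "1 \<le> multiplicity q (fibpoly n)" using power_dvd_iff_le_multiplicity[where p=q and n=1 and x="fibpoly n"] qd nz nu by simp
    ultimately show ?thesis by simp
  qed
  have "fibpoly n = normalize (fibpoly n)" using monic_normalize[OF F_lc[OF n]] by simp
  also have "\<dots> = prod_mset (prime_factorization (fibpoly n))"
    by (simp add: prod_mset_prime_factorization nz)
  also have "\<dots> = (\<Prod>q \<in> prime_factors (fibpoly n). q ^ count (prime_factorization (fibpoly n)) q)"
    by (subst prod_mset_multiplicity) simp
  also have "\<dots> = \<Prod> (prime_factors (fibpoly n))"
    by (rule prod.cong) (auto simp: mult1 count_prime_factorization_prime in_prime_factors_iff)
  also have "prime_factors (fibpoly n) = (\<Union>d \<in> {d. d dvd n}. S d)"
  proof (intro equalityI subsetI)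
    fix q assume q: "q \<in> prime_factors (fibpoly n)"
    have pq: "prime q" and qd: "q dvd fibpoly n" using q by (auto simp: in_prime_factors_iff)
    define r where "r = (LEAST k. 1 \<le> k \<and> q dvd fibpoly k)"
    have r1: "1 \<le> r \<and> q dvd fibpoly r" unfolding r_def by (rule LeastI[of _ n]) (use n qd in auto)
    have rmin: "\<forall>k. 1 \<le> k \<and> k < r \<longrightarrow> \<not> q dvd fibpoly k"
      unfolding r_def using not_less_Least by blast
    have "r dvd n" using F_rank_dvd[of q r n] pq r1 rmin qd by (auto simp: prime_def)
    moreover have "q \<in> S r" unfolding S_def using r1 rmin pq F_nz[of r]
      by (auto simp: in_prime_factors_iff)
    ultimately show "q \<in> (\<Union>d \<in> {d. d dvd n}. S d)" by auto
  next
    fix q assume "q \<in> (\<Union>d \<in> {d. d dvd n}. S d)"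
    then obtain d where dn: "d dvd n" and q: "q \<in> S d" by auto
    have "q dvd fibpoly d" "prime q" using q by (auto simp: S_def in_prime_factors_iff)
    moreover have "fibpoly d dvd fibpoly n" using dn F_dvd_mult by (auto elim: dvdE)
    ultimately show "q \<in> prime_factors (fibpoly n)" using nz
      by (auto simp: in_prime_factors_iff intro: dvd_trans)
  qed
  also have "\<Prod> (\<Union>d \<in> {d. d dvd n}. S d) = (\<Prod>d \<in> {d. d dvd n}. \<Prod> (S d))"
  proof (rule prod.UNION_disjoint)
    show "finite {d. d dvd n}" using n by simp
    show "\<forall>i\<in>{d. d dvd n}. finite (S i)" by (auto simp: S_def)
    show "\<forall>i\<in>{d. d dvd n}. \<forall>j\<in>{d. d dvd n}. i \<noteq> j \<longrightarrow> S i \<inter> S j = {}"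
    proof (intro ballI impI)
      fix i j assume ij: "i \<in> {d. d dvd n}" "j \<in> {d. d dvd n}" "i \<noteq> j"
      then have "i \<ge> 1" "j \<ge> 1" using n by (auto intro: Suc_leI dvd_pos_nat)
      show "S i \<inter> S j = {}"
      proof (cases "i < j")
        case True then show ?thesis using \<open>i \<ge> 1\<close> by (auto simp: S_def in_prime_factors_iff)
      next
        case False then have "j < i" using ij by simp
        then show ?thesis using \<open>j \<ge> 1\<close> by (auto simp: S_def in_prime_factors_iff)
      qed
    qed
  qed
  also have "\<dots> = (\<Prod>d \<in> {d. d dvd n}. fibotomic d)"
    by (rule prod.cong) (use n in \<open>auto simp: fibotomic_S intro: Suc_leI dvd_pos_nat\<close>)
  finally show ?thesis .
qed




datatype sq = SQ (sa: "int poly") (sb: "int poly")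

instantiation sq :: comm_ring_1
begin
definition zero_sq where "0 = SQ 0 0"
definition one_sq where "1 = SQ 0 1"
definition plus_sq where "x + y = SQ (sa x + sa y) (sb x + sb y)"
definition minus_sq where "x - y = SQ (sa x - sa y) (sb x - sb y)"
definition uminus_sq where "- x = SQ (- sa x) (- sb x)"
definition times_sq where "x * y = SQ (sa x * sa y * X + sa x * sb y + sb x * sa y) (sa x * sa y + sb x * sb y)"
instance
proof
  fix a b c :: sq
  show "a * b * c = a * (b * c)"
    by (simp add: times_sq_def sq.expand algebra_simps)
  show "a * b = b * a" by (simp add: times_sq_def sq.expand algebra_simps)
  show "1 * a = a" by (simp add: times_sq_def one_sq_def sq.expand)
  show "(a + b) * c = a * c + b * c" by (simp add: times_sq_def plus_sq_def sq.expand algebra_simps)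
  show "a + b + c = a + (b + c)" by (simp add: plus_sq_def)
  show "a + b = b + a" by (simp add: plus_sq_def add.commute)
  show "0 + a = a" by (simp add: plus_sq_def zero_sq_def)
  show "- a + a = 0" by (simp add: plus_sq_def zero_sq_def uminus_sq_def)
  show "a - b = a + - b" by (simp add: plus_sq_def minus_sq_def uminus_sq_def)
  show "(0::sq) \<noteq> 1" by (simp add: zero_sq_def one_sq_def)
qed
end


definition Fm1 :: "nat \<Rightarrow> int poly" where "Fm1 n = (if n = 0 then 1 else fibpoly (n - 1))"
definition sc :: "int poly \<Rightarrow> sq" where "sc c = SQ 0 c"
definition al :: sq where "al = SQ 1 0"

lemma sa_SQ_simps: "sa 0 = 0" "sa (x + y) = sa x + sa y" by (simp_all add: zero_sq_def plus_sq_def)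

lemma sa_sum: "sa (sum f A) = (\<Sum>i\<in>A. sa (f i))"
  by (induction A rule: infinite_finite_induct) (simp_all add: sa_SQ_simps)

lemma sa_sc: "sa (sc c * z) = c * sa z" by (simp add: sc_def times_sq_def)

lemma sc_mult: "sc (a * b) = sc a * sc b" by (simp add: sc_def times_sq_def)
lemma sc_one: "sc 1 = 1" by (simp add: sc_def one_sq_def)
lemma sc_pow: "sc (a ^ n) = sc a ^ n" by (induction n) (simp_all add: sc_one sc_mult)
lemma sc_of_nat: "of_nat n = sc (of_nat n)"
  by (induction n) (simp_all add: sc_def zero_sq_def one_sq_def plus_sq_def)

lemma al_pow: "al ^ n = SQ (fibpoly n) (Fm1 n)"
proof (induction n)
  case 0 then show ?case by (simp add: one_sq_def Fm1_def)
next
  case (Suc n)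
  have "X * fibpoly n + Fm1 n = fibpoly (Suc n)"
    by (cases n) (simp_all add: Fm1_def)
  then show ?case using Suc by (simp add: al_def times_sq_def Fm1_def)
qed

lemma al_pow': "al ^ n = sc (fibpoly n) * al + sc (Fm1 n)"
  unfolding al_pow by (simp add: sc_def al_def times_sq_def plus_sq_def)

lemma F_mult_binom: "fibpoly (j * n) =
  (\<Sum>k\<le>n. of_nat (n choose k) * fibpoly j ^ k * Fm1 j ^ (n - k) * fibpoly k)"
proof -
  have "fibpoly (j * n) = sa (al ^ (j * n))" by (simp add: al_pow)
  also have "al ^ (j * n) = (sc (fibpoly j) * al + sc (Fm1 j)) ^ n"
    by (simp add: power_mult al_pow')
  also have "\<dots> = (\<Sum>k\<le>n. of_nat (n choose k) * (sc (fibpoly j) * al) ^ k * sc (Fm1 j) ^ (n - k))"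
    by (rule binomial_ring)
  also have "\<dots> = (\<Sum>k\<le>n. sc (of_nat (n choose k) * fibpoly j ^ k * Fm1 j ^ (n - k)) * al ^ k)"
    by (rule sum.cong) (simp_all add: sc_mult sc_pow sc_of_nat power_mult_distrib algebra_simps)
  finally show ?thesis by (simp add: sa_sum sa_sc al_pow)
qed


definition cg :: "nat \<Rightarrow> int poly \<Rightarrow> int poly \<Rightarrow> bool" where
  "cg p f g \<longleftrightarrow> [:int p:] dvd f - g"

lemma cg_refl: "cg p f f" by (simp add: cg_def)
lemma cg_sym: "cg p f g \<Longrightarrow> cg p g f"
proof -
  assume "cg p f g"
  then have "[:int p:] dvd - (f - g)" unfolding cg_def by (simp only: dvd_minus_iff)
  then show ?thesis unfolding cg_def by simp
qed
lemma cg_trans: "cg p f g \<Longrightarrow> cg p g h \<Longrightarrow> cg p f h"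
proof -
  assume "cg p f g" "cg p g h"
  then have "[:int p:] dvd (f - g) + (g - h)" unfolding cg_def by (rule dvd_add)
  then show ?thesis unfolding cg_def by simp
qed
lemma cg_mult: "cg p a b \<Longrightarrow> cg p c d \<Longrightarrow> cg p (a * c) (b * d)"
proof -
  assume "cg p a b" "cg p c d"
  then have "[:int p:] dvd a * (c - d) + (a - b) * d" unfolding cg_def
    by (intro dvd_add dvd_mult dvd_mult2)
  moreover have "a * (c - d) + (a - b) * d = a * c - b * d" by (simp add: algebra_simps)
  ultimately show ?thesis unfolding cg_def by simp
qed
lemma cg_pow: "cg p a b \<Longrightarrow> cg p (a ^ n) (b ^ n)"
  by (induction n) (simp_all add: cg_refl cg_mult)
lemma cg_prod: "(\<And>i. i \<in> A \<Longrightarrow> cg p (f i) (g i)) \<Longrightarrow> cg p (prod f A) (prod g A)"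
  by (induction A rule: infinite_finite_induct) (simp_all add: cg_refl cg_mult)

lemma cg_cancel:
  assumes p: "prime p" and a: "lead_coeff a = 1" and c: "cg p (a * b) (a * c)"
  shows "cg p b c"
proof -
  have pe: "prime_elem [:int p:]" using p by (simp add: prime_elem_const_poly_iff)
  have "[:int p:] dvd a * (b - c)" using c unfolding cg_def by (simp add: algebra_simps)
  then have "[:int p:] dvd a \<or> [:int p:] dvd b - c" using pe prime_elem_dvd_mult_iff by blast
  moreover have "\<not> [:int p:] dvd a"
  proof
    assume "[:int p:] dvd a"
    then have "int p dvd lead_coeff a" by (simp add: const_poly_dvd_iff)
    then show False using a p by (simp add: prime_gt_1_nat)
  qed
  ultimately show ?thesis unfolding cg_def by blast
qed

lemma cg_coeff: "cg p f g \<Longrightarrow> [coeff f i = coeff g i] (mod int p)"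
  unfolding cg_def cong_iff_dvd_diff by (simp add: const_poly_dvd_iff flip: coeff_diff)

lemma F_p_mult:
  assumes p: "prime p"
  shows "cg p (fibpoly (p * j)) (fibpoly j ^ p * fibpoly p)"
proof -
  let ?t = "\<lambda>k. of_nat (p choose k) * fibpoly j ^ k * Fm1 j ^ (p - k) * fibpoly k"
  have p0: "p > 0" using p prime_gt_0_nat by blast
  have "fibpoly (p * j) = (\<Sum>k\<le>p. ?t k)" using F_mult_binom[of j p] by (simp add: mult.commute)
  also have "\<dots> = ?t 0 + (\<Sum>k\<in>{..p}-{0}. ?t k)" by (rule sum.remove) auto
  also have "(\<Sum>k\<in>{..p}-{0}. ?t k) = ?t p + (\<Sum>k\<in>{..p}-{0}-{p}. ?t k)"
    by (rule sum.remove) (use p0 in auto)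
  also have "{..p}-{0}-{p} = {1..<p}" by auto
  finally have e: "fibpoly (p * j) - fibpoly j ^ p * fibpoly p = (\<Sum>k\<in>{1..<p}. ?t k)" by simp
  have "[:int p:] dvd (\<Sum>k\<in>{1..<p}. ?t k)"
  proof (rule dvd_sum)
    fix k assume k: "k \<in> {1..<p}"
    have "p dvd p choose k" using dvd_choose_prime[of k p] k p by auto
    then have "[:int p:] dvd (of_nat (p choose k) :: int poly)"
      by (auto simp: of_nat_poly const_poly_dvd_iff coeff_pCons split: nat.splits)
    then show "[:int p:] dvd ?t k" by (simp add: mult.assoc)
  qed
  then show ?thesis unfolding cg_def e .
qed




abbreviation Psi where "Psi \<equiv> fibotomic"

lemma Psi_monic: "lead_coeff (Psi d) = 1"
proof (cases "d \<le> 1")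
  case True then show ?thesis by (simp add: fibotomic_def)
next
  case False
  then show ?thesis unfolding fibotomic_def by (simp add: lead_coeff_prod)
qed

lemma prod_monic: "(\<And>i. i \<in> A \<Longrightarrow> lead_coeff (f i) = (1::int)) \<Longrightarrow> lead_coeff (prod f A) = 1"
  by (simp add: lead_coeff_prod)

lemma div_split:
  fixes p n k :: nat
  assumes p: "prime p" and cp: "coprime p n" and n: "n \<ge> 1"
  shows "{e. e dvd p^(k+1)*n} = {e. e dvd p^k*n} \<union> (\<lambda>d. p^(k+1)*d) ` {d. d dvd n}"
    and "{e. e dvd p^k*n} \<inter> (\<lambda>d. p^(k+1)*d) ` {d. d dvd n} = {}"
proof -
  show "{e. e dvd p^(k+1)*n} = {e. e dvd p^k*n} \<union> (\<lambda>d. p^(k+1)*d) ` {d. d dvd n}"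
  proof (intro equalityI subsetI)
    fix e assume "e \<in> {e. e dvd p^(k+1)*n}"
    then have "e dvd p^(k+1)*n" by simp
    then obtain b c where bc: "e = b * c" "b dvd p^(k+1)" "c dvd n" using division_decomp by blast
    then obtain i where i: "i \<le> k+1" "b = p^i" using divides_primepow_nat[OF p] by blast
    show "e \<in> {e. e dvd p^k*n} \<union> (\<lambda>d. p^(k+1)*d) ` {d. d dvd n}"
    proof (cases "i = k+1")
      case True
      then have "e = p^(k+1)*c" using bc i by simp
      moreover have "c \<in> {d. d dvd n}" using bc(3) by simp
      ultimately have "e \<in> (\<lambda>d. p^(k+1)*d) ` {d. d dvd n}" by (rule image_eqI)
      then show ?thesis by (rule UnI2)
    next
      case False
      then have "i \<le> k" using i by simp
      then have "p^i dvd p^k" by (rule le_imp_power_dvd)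
      then have "e dvd p^k * n" using bc i by (simp add: mult_dvd_mono)
      then show ?thesis by simp
    qed
  next
    fix e assume "e \<in> {e. e dvd p^k*n} \<union> (\<lambda>d. p^(k+1)*d) ` {d. d dvd n}"
    then show "e \<in> {e. e dvd p^(k+1)*n}"
    proof
      assume "e \<in> {e. e dvd p^k*n}"
      then have "e dvd p^k*n" by simp
      also have "p^k*n dvd p^(k+1)*n" by (simp add: mult_dvd_mono)
      finally show ?thesis by simp
    next
      assume "e \<in> (\<lambda>d. p^(k+1)*d) ` {d. d dvd n}"
      then obtain d where d: "e = p^(k+1)*d" "d dvd n" by blast
      have "p^(k+1)*d dvd p^(k+1)*n" using d(2) by (rule mult_dvd_mono[OF dvd_refl])
      then show ?thesis using d(1) by simp
    qed
  qed
  show "{e. e dvd p^k*n} \<inter> (\<lambda>d. p^(k+1)*d) ` {d. d dvd n} = {}"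
  proof (rule ccontr)
    assume "{e. e dvd p^k*n} \<inter> (\<lambda>d. p^(k+1)*d) ` {d. d dvd n} \<noteq> {}"
    then obtain e where e: "e \<in> {e. e dvd p^k*n}" "e \<in> (\<lambda>d. p^(k+1)*d) ` {d. d dvd n}" by blast
    then obtain d where "e = p^(k+1)*d" by blast
    then have "p^(k+1)*d dvd p^k*n" using e(1) by simp
    then have "p^k * (p*d) dvd p^k * n" by (simp add: algebra_simps)
    then have "p*d dvd n" using p by (simp add: prime_gt_0_nat)
    then have "p dvd n" by (rule dvd_mult_left)
    then have "p dvd gcd p n" by (intro gcd_greatest dvd_refl)
    then have "p dvd 1" using cp by simp
    then show False using p by simp
  qed
qed

definition AA :: "nat \<Rightarrow> nat \<Rightarrow> nat \<Rightarrow> int poly" where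
  "AA p k n = (\<Prod>d\<in>{d. d dvd n}. Psi (p^k * d))"

lemma F_split:
  fixes p n k :: nat
  assumes p: "prime p" and cp: "coprime p n" and n: "n \<ge> 1"
  shows "fibpoly (p^(k+1)*n) = fibpoly (p^k*n) * AA p (k+1) n"
proof -
  have p0: "p > 0" using p prime_gt_0_nat by blast
  have "fibpoly (p^(k+1)*n) = (\<Prod>e\<in>{e. e dvd p^(k+1)*n}. Psi e)"
    by (rule F_prod) (use n p0 in simp)
  also have "\<dots> = (\<Prod>e\<in>{e. e dvd p^k*n}. Psi e) * (\<Prod>e\<in>(\<lambda>d. p^(k+1)*d) ` {d. d dvd n}. Psi e)"
    unfolding div_split(1)[OF p cp n]
    by (rule prod.union_disjoint) (use n p0 div_split(2)[OF p cp n] in auto)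
  also have "(\<Prod>e\<in>{e. e dvd p^k*n}. Psi e) = fibpoly (p^k*n)"
    by (rule F_prod[symmetric]) (use n p0 in simp)
  also have "(\<Prod>e\<in>(\<lambda>d. p^(k+1)*d) ` {d. d dvd n}. Psi e) = AA p (k+1) n"
    unfolding AA_def by (rule prod.reindex_cong[where l="\<lambda>d. p^(k+1)*d"]) (use p0 in \<open>auto simp: inj_on_def\<close>)
  finally show ?thesis .
qed


lemma inversion:
  fixes p :: nat and Xf Yf :: "nat \<Rightarrow> int poly"
  assumes p: "prime p"
    and Ym: "\<And>d. lead_coeff (Yf d) = 1"
    and H: "\<And>n. n \<ge> 1 \<Longrightarrow> coprime p n \<Longrightarrow>
              cg p (\<Prod>d\<in>{d. d dvd n}. Xf d) (\<Prod>d\<in>{d. d dvd n}. Yf d)"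
  shows "n \<ge> 1 \<Longrightarrow> coprime p n \<Longrightarrow> cg p (Xf n) (Yf n)"
proof (induction n rule: less_induct)
  case (less n)
  let ?D = "{d. d dvd n} - {n}"
  have fin: "finite ?D" using less.prems by simp
  have ins: "{d. d dvd n} = insert n ?D" by auto
  have ps: "(\<Prod>d\<in>{d. d dvd n}. f d) = f n * (\<Prod>d\<in>?D. f d)" for f :: "nat \<Rightarrow> int poly"
    by (subst ins, rule prod.insert[OF fin]) simp
  have IH: "cg p (Xf d) (Yf d)" if d: "d \<in> ?D" for d
  proof -
    have dn: "d dvd n" "d \<noteq> n" using d by auto
    have "d \<le> n" using dn(1) less.prems(1) by (simp add: dvd_imp_le)
    then have "d < n" using dn(2) by simp
    moreover have "d \<ge> 1" using dn(1) less.prems(1) by (metis dvd_pos_nat less_one not_less zero_less_iff_neq_zero Suc_le_eq One_nat_def)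
    moreover have "coprime p d" using coprime_divisors[OF dvd_refl dn(1) less.prems(2)] .
    ultimately show ?thesis using less.IH by blast
  qed
  have cP: "cg p (\<Prod>d\<in>?D. Xf d) (\<Prod>d\<in>?D. Yf d)" by (rule cg_prod) (rule IH)
  have h: "cg p (Xf n * (\<Prod>d\<in>?D. Xf d)) (Yf n * (\<Prod>d\<in>?D. Yf d))"
    using H[OF less.prems] unfolding ps .
  have "cg p (Xf n * (\<Prod>d\<in>?D. Yf d)) (Xf n * (\<Prod>d\<in>?D. Xf d))"
    by (rule cg_mult[OF cg_refl cg_sym[OF cP]])
  then have "cg p (Xf n * (\<Prod>d\<in>?D. Yf d)) (Yf n * (\<Prod>d\<in>?D. Yf d))"
    using h by (rule cg_trans)
  then have "cg p ((\<Prod>d\<in>?D. Yf d) * Xf n) ((\<Prod>d\<in>?D. Yf d) * Yf n)"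
    by (simp add: mult.commute)
  moreover have "lead_coeff (\<Prod>d\<in>?D. Yf d) = 1" by (rule prod_monic) (rule Ym)
  ultimately show ?case using cg_cancel[OF p] by blast
qed

lemma step1:
  fixes p m :: nat
  assumes p: "prime p" and cp: "coprime p m" and m: "m \<ge> 2"
  shows "cg p (Psi (p*m)) (Psi m ^ (p-1))"
proof -
  have p1: "p \<ge> 1" using p prime_gt_0_nat by (simp add: Suc_le_eq)
  define Yf where "Yf d = (if d = 1 then fibpoly p else 1) * Psi d ^ (p-1)" for d
  have Ym: "lead_coeff (Yf d) = 1" for d
    unfolding Yf_def using F_lc[OF p1] by (simp add: lead_coeff_mult lead_coeff_power Psi_monic)
  have H: "cg p (\<Prod>d\<in>{d. d dvd n}. Psi (p * d)) (\<Prod>d\<in>{d. d dvd n}. Yf d)"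
    if n: "n \<ge> 1" and cpn: "coprime p n" for n
  proof -
    have fin: "finite {d. d dvd n}" using n by simp
    have "(\<Prod>d\<in>{d. d dvd n}. Yf d) = (\<Prod>d\<in>{d. d dvd n}. (if d = 1 then fibpoly p else 1)) * (\<Prod>d\<in>{d. d dvd n}. Psi d) ^ (p-1)"
      unfolding Yf_def by (simp add: prod.distrib prod_power_distrib)
    also have "(\<Prod>d\<in>{d. d dvd n}. (if d = 1 then fibpoly p else 1)) = fibpoly p"
      using prod.delta[OF fin, of 1 "\<lambda>_. fibpoly p"] by simp
    also have "(\<Prod>d\<in>{d. d dvd n}. Psi d) = fibpoly n" using F_prod[OF n] by simp
    finally have eY: "(\<Prod>d\<in>{d. d dvd n}. Yf d) = fibpoly p * fibpoly n ^ (p-1)" .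
    have eX: "(\<Prod>d\<in>{d. d dvd n}. Psi (p * d)) = AA p 1 n" by (simp add: AA_def)
    have sp: "fibpoly (p*n) = fibpoly n * AA p 1 n" using F_split[OF p cpn n, of 0] by simp
    have "cg p (fibpoly (p * n)) (fibpoly n ^ p * fibpoly p)" by (rule F_p_mult[OF p])
    moreover have "fibpoly n ^ p * fibpoly p = fibpoly n * (fibpoly p * fibpoly n ^ (p-1))"
      using p1 by (cases p) (simp_all add: algebra_simps)
    ultimately have "cg p (fibpoly n * AA p 1 n) (fibpoly n * (fibpoly p * fibpoly n ^ (p-1)))"
      using sp by simp
    then have "cg p (AA p 1 n) (fibpoly p * fibpoly n ^ (p-1))"
      by (rule cg_cancel[OF p F_lc[OF n]])
    then show ?thesis unfolding eX eY .
  qed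
  have "cg p (Psi (p * m)) (Yf m)"
    by (rule inversion[OF p Ym, of "\<lambda>d. Psi (p * d)"]) (use H m cp in auto)
  then show ?thesis using m by (simp add: Yf_def)
qed

lemma step2:
  fixes p m k :: nat
  assumes p: "prime p" and cp: "coprime p m" and m: "m \<ge> 1"
  shows "cg p (Psi (p^(k+2)*m)) (Psi (p^(k+1)*m) ^ p)"
proof -
  define Yf where "Yf d = Psi (p^(k+1)*d) ^ p" for d
  have Ym: "lead_coeff (Yf d) = 1" for d
    unfolding Yf_def by (simp add: lead_coeff_power Psi_monic)
  have H: "cg p (\<Prod>d\<in>{d. d dvd n}. Psi (p^(k+2) * d)) (\<Prod>d\<in>{d. d dvd n}. Yf d)"
    if n: "n \<ge> 1" and cpn: "coprime p n" for n
  proof -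
    have p1: "p \<ge> 1" using p prime_gt_0_nat by (simp add: Suc_le_eq)
    define B where "B = fibpoly (p^k*n)"
    define A1 where "A1 = AA p (k+1) n"
    define A2 where "A2 = AA p (k+2) n"
    have eY: "(\<Prod>d\<in>{d. d dvd n}. Yf d) = A1 ^ p" unfolding Yf_def A1_def AA_def
      by (simp add: prod_power_distrib)
    have eX: "(\<Prod>d\<in>{d. d dvd n}. Psi (p^(k+2) * d)) = A2" by (simp add: A2_def AA_def)
    have s1: "fibpoly (p^(k+1)*n) = B * A1" unfolding B_def A1_def by (rule F_split[OF p cpn n])
    have s2: "fibpoly (p^(k+2)*n) = B * A1 * A2"
      using F_split[OF p cpn n, of "k+1"] s1 unfolding A2_def by (simp add: numeral_eq_Suc)
    have c2: "cg p (fibpoly (p^(k+2)*n)) (fibpoly (p^(k+1)*n) ^ p * fibpoly p)"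
      using F_p_mult[OF p, of "p^(k+1)*n"] by (simp add: numeral_eq_Suc mult.assoc)
    have c1: "cg p (fibpoly (p^(k+1)*n)) (B ^ p * fibpoly p)"
      using F_p_mult[OF p, of "p^k*n"] unfolding B_def by (simp add: mult.assoc)
    have "cg p (B * A1 * A2) (B^p * fibpoly p * A1^p)"
      using c2 unfolding s2 s1 by (simp add: power_mult_distrib algebra_simps)
    moreover have "cg p (B * A1 * A2) (B^p * fibpoly p * A2)"
      using cg_mult[OF c1 cg_refl[of p A2]] unfolding s1 .
    ultimately have "cg p (B^p * fibpoly p * A2) (B^p * fibpoly p * A1^p)"
      by (meson cg_sym cg_trans)
    moreover have "lead_coeff (B^p * fibpoly p) = 1"
      unfolding B_def using F_lc[OF p1] F_lc[of "p^k*n"] n p1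
      by (simp add: lead_coeff_mult lead_coeff_power)
    ultimately have "cg p A2 (A1^p)" using cg_cancel[OF p] by (simp add: mult.assoc)
    then show ?thesis unfolding eX eY .
  qed
  have "cg p (Psi (p^(k+2) * m)) (Yf m)"
    by (rule inversion[OF p Ym, of "\<lambda>d. Psi (p^(k+2) * d)"]) (use H m cp in auto)
  then show ?thesis by (simp add: Yf_def)
qed

theorem mainTheorem12:
  fixes p m k :: nat
  assumes "prime p" and "m \<ge> 2" and "coprime p m"
  shows "\<forall>i. [coeff (fibotomic (p ^ k * m)) i = coeff (fibotomic m ^ totient (p ^ k)) i] (mod int p)"
proof -
  note p = assms(1) and m = assms(2) and cp = assms(3)
  have "cg p (Psi (p^k*m)) (Psi m ^ totient (p^k))"
  proof (induction k rule: nat_less_induct)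
    case (1 k)
    show ?case
    proof (cases k)
      case 0 then show ?thesis by (simp add: cg_refl)
    next
      case (Suc j)
      show ?thesis
      proof (cases j)
        case 0
        then show ?thesis using step1[OF p cp m] Suc p by (simp add: totient_prime)
      next
        case (Suc i)
        have k: "k = i + 2" using \<open>k = Suc j\<close> Suc by simp
        have IH: "cg p (Psi (p^(i+1)*m)) (Psi m ^ totient (p^(i+1)))"
          using 1[rule_format, of "i+1"] k by simp
        have "cg p (Psi (p^(i+2)*m)) (Psi (p^(i+1)*m) ^ p)" using step2[OF p cp] m by simp
        moreover have "cg p (Psi (p^(i+1)*m) ^ p) ((Psi m ^ totient (p^(i+1))) ^ p)"
          by (rule cg_pow[OF IH])
        moreover have "totient (p^(i+2)) = totient (p^(i+1)) * p"
          using totient_prime_power[OF p, of "i+2"] totient_prime_power[OF p, of "i+1"]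
          by (simp add: algebra_simps)
        ultimately have "cg p (Psi (p^(i+2)*m)) (Psi m ^ totient (p^(i+2)))"
          by (simp add: power_mult cg_trans)
        then show ?thesis using k by simp
      qed
    qed
  qed
  then show ?thesis using cg_coeff by blast
qed


end
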